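(* Let $\Omega\subset\mathbb{R}^n$ be an open set, $K\subset\Omega$ a non-empty compact set, and $\lambda>0$. Let $\chi_K:\mathbb{R}^n\to\{0,1\}$ be the characteristic function of $K$ and $\chi_K^\Omega$ its restriction to $\overline\Omega$. If $\mathrm{dist}^2(K,\partial\Omega)>1/\lambda$, then for every $x\in\overline\Omega$, $$M^{\lambda}_{\Omega}(\chi_K^\Omega)(x)=M^\lambda(\chi_K)(x),\qquad M_{\lambda,\Omega}(M^{\lambda}_{\Omega}(\chi_K^\Omega))(x)=M_\lambda(M^\lambda(\chi_K))(x),$$ and consequently, setting $C^u_{\lambda,\Omega}(\chi_K^\Omega)(x)=M_{\lambda,\Omega}(M^{\lambda}_{\Omega}(\chi_K^\Omega))(x)$, we have $C^u_{\lambda,\Omega}(\chi_K^\Omega)(x)=C^u_\lambda(\chi_K)(x)$.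
   Context: $\mathrm{dist}(K,\partial\Omega)=\inf\{|x-y|:x\in K,\,y\in\partial\Omega\}$. For bounded $g:\mathbb{R}^n\to\mathbb{R}$: $M_\lambda(g)(x)=\inf_{y\in\mathbb{R}^n}\{g(y)+\lambda|y-x|^2\}$, $M^\lambda(g)(x)=\sup_{y\in\mathbb{R}^n}\{g(y)-\lambda|y-x|^2\}$. For bounded $g:\overline\Omega\to\mathbb{R}$ and $x\in\overline\Omega$: $M_{\lambda,\Omega}(g)(x)=\inf_{y\in\overline\Omega}\{g(y)+\lambda|y-x|^2\}$, $M^{\lambda}_{\Omega}(g)(x)=\sup_{y\in\overline\Omega}\{g(y)-\lambda|y-x|^2\}$. The upper compensated convex transform is $C^u_\lambda(g)(x)=\lambda|x|^2-\mathrm{co}[\lambda|\cdot|^2-g](x)$, with $\mathrm{co}$ the convex envelope. *)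

theory Defs
  imports "HOL-Analysis.Analysis"
begin

definition lower_env :: "real \<Rightarrow> ('a::euclidean_space \<Rightarrow> real) \<Rightarrow> 'a \<Rightarrow> real" where
  "lower_env lam g x = (INF y. g y + lam * (norm (y - x))^2)"

definition upper_env :: "real \<Rightarrow> ('a::euclidean_space \<Rightarrow> real) \<Rightarrow> 'a \<Rightarrow> real" where
  "upper_env lam g x = (SUP y. g y - lam * (norm (y - x))^2)"

definition lower_env_on :: "'a::euclidean_space set \<Rightarrow> real \<Rightarrow> ('a \<Rightarrow> real) \<Rightarrow> 'a \<Rightarrow> real" where
  "lower_env_on Om lam g x = (INF y\<in>closure Om. g y + lam * (norm (y - x))^2)"

definition upper_env_on :: "'a::euclidean_space set \<Rightarrow> real \<Rightarrow> ('a \<Rightarrow> real) \<Rightarrow> 'a \<Rightarrow> real" where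
  "upper_env_on Om lam g x = (SUP y\<in>closure Om. g y - lam * (norm (y - x))^2)"

definition convex_envelope :: "('a::euclidean_space \<Rightarrow> real) \<Rightarrow> 'a \<Rightarrow> real" where
  "convex_envelope f x = (SUP g\<in>{g. convex_on UNIV g \<and> (\<forall>y. g y \<le> f y)}. g x)"

definition upper_cc_transform :: "real \<Rightarrow> ('a::euclidean_space \<Rightarrow> real) \<Rightarrow> 'a \<Rightarrow> real" where
  "upper_cc_transform lam g x =
     lam * (norm x)^2 - convex_envelope (\<lambda>y. lam * (norm y)^2 - g y) x"

end

theory Submission imports Defs begin

lemma subgrad:
  fixes phi :: "'a::euclidean_space \<Rightarrow> real"
  assumes cv: "convex_on UNIV phi"
  shows "\<exists>q. \<forall>z. phi x + q \<bullet> (z - x) \<le> phi z"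
proof -
  define S where "S = {(z, t). phi z < t}"
  define T where "T = {(x, phi x)}"
  have "convex S"
    unfolding S_def convex_def
  proof (clarsimp)
    fix z1 t1 z2 t2 and u v :: real
    assume h: "phi z1 < t1" "phi z2 < t2" "0 \<le> u" "0 \<le> v" "u + v = 1"
    have "phi (u *\<^sub>R z1 + v *\<^sub>R z2) \<le> u * phi z1 + v * phi z2"
      using cv h unfolding convex_on_def by blast
    also have "\<dots> < u * t1 + v * t2"
    proof (cases "u = 0")
      case True then show ?thesis using h by simp
    next
      case False then have "u > 0" using h by simp
      then have "u * phi z1 < u * t1" using h by simp
      moreover have "v * phi z2 \<le> v * t2" using h by (simp add: mult_left_mono)
      ultimately show ?thesis by linarith
    qed
    finally show "phi (u *\<^sub>R z1 + v *\<^sub>R z2) < u * t1 + v * t2" .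
  qed
  moreover have "convex T" unfolding T_def by simp
  moreover have "S \<noteq> {}" unfolding S_def using lt_ex[of "phi x"] by (auto simp: gt_ex)
  moreover have "T \<noteq> {}" unfolding T_def by simp
  moreover have "S \<inter> T = {}" unfolding S_def T_def by auto
  ultimately obtain a b where ab: "a \<noteq> 0" "\<forall>w\<in>S. inner a w \<le> b" "\<forall>w\<in>T. inner a w \<ge> b"
    using separating_hyperplane_sets by blast
  obtain p c where a: "a = (p, c)" by (cases a)
  have key: "p \<bullet> z + c * t \<le> p \<bullet> x + c * phi x" if "phi z < t" for z t
    using ab that unfolding S_def T_def a by (force simp: inner_Pair)
  have "c < 0"
  proof (rule ccontr)
    assume "\<not> c < 0"
    then have c0: "c \<ge> 0" by simp
    show False
    proof (cases "c = 0")
      case True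
      then have "p \<noteq> 0" using ab a by (auto simp: zero_prod_def)
      have "p \<bullet> (x + p) \<le> p \<bullet> x" using key[of "x + p" "phi (x+p) + 1"] True by simp
      then have "p \<bullet> p \<le> 0" by (simp add: inner_add_right)
      then show False using \<open>p \<noteq> 0\<close> inner_gt_zero_iff[of p] by linarith
    next
      case False
      then have "c > 0" using c0 by simp
      have "p \<bullet> x + c * (\<bar>phi x\<bar> + 1) \<le> p \<bullet> x + c * phi x"
        using key[of x "\<bar>phi x\<bar> + 1"] by simp
      then have "c * (\<bar>phi x\<bar> + 1) \<le> c * phi x" by simp
      then have "\<bar>phi x\<bar> + 1 \<le> phi x" using \<open>c > 0\<close> by simp
      then show False by simp
    qed
  qed
  define q where "q = (-1 / c) *\<^sub>R p"
  have "phi x + q \<bullet> (z - x) \<le> phi z" for z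
  proof (rule field_le_epsilon)
    fix e :: real assume "e > 0"
    have "p \<bullet> z + c * (phi z + e) \<le> p \<bullet> x + c * phi x" using key[of z "phi z + e"] \<open>e > 0\<close> by simp
    then have "p \<bullet> (z - x) \<le> - c * (phi z + e - phi x)" by (simp add: inner_diff_right algebra_simps)
    then have "(-1/c) * (p \<bullet> (z - x)) \<le> phi z + e - phi x"
      using \<open>c < 0\<close> by (simp add: field_simps)
    then show "phi x + q \<bullet> (z - x) \<le> phi z + e" unfolding q_def by simp
  qed
  then show ?thesis by blast
qed


lemma sq_id: "norm (y - c)^2 = norm y^2 - 2 * (y \<bullet> c) + norm (c::'a::real_inner)^2"
  by (simp add: power2_norm_eq_inner inner_diff_left inner_diff_right inner_commute)

theorem theorem3p7:
  fixes Om K :: "'a::euclidean_space set" and lam :: real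
  assumes "open Om" and "compact K" and "K \<noteq> {}" and "K \<subseteq> Om" and "lam > 0"
    and "frontier Om = {} \<or> (setdist K (frontier Om))^2 > 1 / lam"
  shows "\<forall>x\<in>closure Om.
           upper_env_on Om lam (indicator K) x = upper_env lam (indicator K) x \<and>
           lower_env_on Om lam (upper_env_on Om lam (indicator K)) x
             = lower_env lam (upper_env lam (indicator K)) x \<and>
           lower_env_on Om lam (upper_env_on Om lam (indicator K)) x
             = upper_cc_transform lam (indicator K) x"
proof -
  define f :: "'a \<Rightarrow> real" where "f = indicator K"
  define u where "u = upper_env lam f"
  define L where "L = lower_env lam u"
  have lam: "lam > 0" by fact
  have f01: "0 \<le> f y" "f y \<le> 1" for y unfolding f_def by (auto simp: indicator_def)
  have bddU: "bdd_above ((\<lambda>y. f y - lam * (norm (y - x))^2) ` A)" for x A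
    by (rule bdd_aboveI[where M=1]) (use f01 lam in \<open>auto intro: add_increasing2\<close>,
        smt (verit) f01 lam mult_nonneg_nonneg zero_le_power2)
  have u_ge: "f y - lam * (norm (y - x))^2 \<le> u x" for x y
    unfolding u_def upper_env_def by (rule cSUP_upper[OF _ bddU]) simp
  have u_ge0: "0 \<le> u x" for x using u_ge[of x x] f01[of x] by simp
  have bddL: "bdd_below ((\<lambda>y. u y + lam * (norm (y - x))^2) ` A)" for x A
    by (rule bdd_belowI[where m=0]) (use u_ge0 lam in auto)
  have L_le: "L x \<le> u y + lam * (norm (y - x))^2" for x y
    unfolding L_def lower_env_def by (rule cINF_lower[OF bddL]) simp
  have clne: "closure Om \<noteq> {}" using assms(3,4) closure_subset by blast
  have Kcl: "K \<subseteq> closure Om" using assms(4) closure_subset by blast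
  have P1: "upper_env_on Om lam f x = u x" if x: "x \<in> closure Om" for x
  proof (rule antisym)
    show "upper_env_on Om lam f x \<le> u x"
      unfolding upper_env_on_def by (rule cSUP_least[OF clne]) (rule u_ge)
    show "u x \<le> upper_env_on Om lam f x"
      unfolding u_def upper_env_def
    proof (rule cSUP_least)
      fix y
      have xin: "f x - lam * (norm (x - x))^2 \<le> upper_env_on Om lam f x"
        unfolding upper_env_on_def by (rule cSUP_upper[OF x bddU])
      show "f y - lam * (norm (y - x))^2 \<le> upper_env_on Om lam f x"
      proof (cases "y \<in> closure Om")
        case True
        then show ?thesis unfolding upper_env_on_def by (rule cSUP_upper[OF _ bddU])
      next
        case False
        then have "f y = 0" using Kcl unfolding f_def by (auto simp: indicator_def)
        then have "f y - lam * (norm (y - x))^2 \<le> f x - lam * (norm (x - x))^2"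
          using f01[of x] lam by (simp add: order_trans[OF _ f01(1)[of x]])
        then show ?thesis using xin by linarith
      qed
    qed simp
  qed
  have P2: "lower_env_on Om lam (upper_env_on Om lam f) x = L x" if x: "x \<in> closure Om" for x
  proof -
    have "lower_env_on Om lam (upper_env_on Om lam f) x = (INF y\<in>closure Om. u y + lam * (norm (y - x))^2)"
      unfolding lower_env_on_def by (rule INF_cong) (auto simp: P1)
    also have "\<dots> = L x"
    proof (rule antisym)
      show "L x \<le> (INF y\<in>closure Om. u y + lam * (norm (y - x))^2)"
        by (rule cINF_greatest[OF clne]) (rule L_le)
      show "(INF y\<in>closure Om. u y + lam * (norm (y - x))^2) \<le> L x"
        unfolding L_def lower_env_def
      proof (rule cINF_greatest)
        fix y
        obtain z where z: "z \<in> closure Om" "u z + lam * (norm (z - x))^2 \<le> u y + lam * (norm (y - x))^2"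
        proof (cases "y \<in> closure Om")
          case True then show ?thesis using that by blast
        next
          case False
          have "closed_segment x y \<inter> frontier (closure Om) \<noteq> {}"
            by (rule connected_Int_frontier) (use x False in auto)
          then obtain z where zs: "z \<in> closed_segment x y" and zf: "z \<in> frontier (closure Om)" by blast
          have zcl: "z \<in> closure Om" using zf by (simp add: frontier_def)
          have "z \<notin> interior Om" using zf interior_mono[OF closure_subset[of Om]]
            by (auto simp: frontier_def)
          then have zfr: "z \<in> frontier Om" using zcl by (simp add: frontier_def)
          then have sd: "(setdist K (frontier Om))^2 > 1 / lam" using assms(6) by blast
          have uz: "u z \<le> 0"
            unfolding u_def upper_env_def
          proof (rule cSUP_least)
            fix w
            show "f w - lam * (norm (w - z))^2 \<le> 0"
            proof (cases "w \<in> K")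
              case True
              have "setdist K (frontier Om) \<le> dist w z" by (rule setdist_le_dist[OF True zfr])
              moreover have "0 \<le> setdist K (frontier Om)" by (rule setdist_pos_le)
              ultimately have "(setdist K (frontier Om))^2 \<le> (norm (w - z))^2"
                by (simp add: dist_norm power_mono)
              then have "1 / lam < (norm (w - z))^2" using sd by linarith
              then have "1 < lam * (norm (w - z))^2" using lam by (simp add: field_simps)
              then show ?thesis using f01[of w] by linarith
            next
              case False then show ?thesis using lam unfolding f_def by simp
            qed
          qed simp
          have "dist z x \<le> dist x y" using dist_in_closed_segment[OF zs] by simp
          then have "norm (z - x) \<le> norm (y - x)" by (simp add: dist_norm norm_minus_commute)
          then have "(norm (z - x))^2 \<le> (norm (y - x))^2" by (simp add: power_mono)
          then have "u z + lam * (norm (z - x))^2 \<le> u y + lam * (norm (y - x))^2"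
            using uz u_ge0[of y] lam by (smt (verit) mult_left_mono)
          then show ?thesis using that zcl by blast
        qed
        have "(INF y\<in>closure Om. u y + lam * (norm (y - x))^2) \<le> u z + lam * (norm (z - x))^2"
          by (rule cINF_lower[OF bddL z(1)])
        then show "(INF y\<in>closure Om. u y + lam * (norm (y - x))^2) \<le> u y + lam * (norm (y - x))^2"
          using z(2) by linarith
      qed simp
    qed
    finally show ?thesis .
  qed
  define g where "g = (\<lambda>y. lam * (norm y)^2 - f y)"
  define H where "H = (\<lambda>x. lam * (norm x)^2 - L x)"
  define C where "C = {g'. convex_on UNIV g' \<and> (\<forall>y. g' y \<le> g y)}"
  have Hg: "H y \<le> g y" for y
  proof -
    have "f y \<le> L y" unfolding L_def lower_env_def
    proof (rule cINF_greatest)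
      fix z show "f y \<le> u z + lam * (norm (z - y))^2"
        using u_ge[of y z] by (simp add: norm_minus_commute algebra_simps)
    qed simp
    then show ?thesis unfolding H_def g_def by simp
  qed
  have Hconv: "convex_on UNIV H"
  proof (rule convex_onI)
    fix t :: real and a b :: 'a
    assume t: "0 < t" "t < 1"
    define c where "c = (1 - t) *\<^sub>R a + t *\<^sub>R b"
    have "lam * (norm c)^2 + (1 - t) * (L a - lam * (norm a)^2) + t * (L b - lam * (norm b)^2) \<le> (INF y. u y + lam * (norm (y - c))^2)"
    proof (rule cINF_greatest)
      fix y
      have id: "u y + lam * (norm (y - c))^2 - lam * (norm c)^2
        = (1 - t) * (u y + lam * (norm (y - a))^2 - lam * (norm a)^2)
          + t * (u y + lam * (norm (y - b))^2 - lam * (norm b)^2)"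
        unfolding sq_id c_def by (simp add: inner_add_right algebra_simps)
      have "(1 - t) * (L a - lam * (norm a)^2) \<le> (1 - t) * (u y + lam * (norm (y - a))^2 - lam * (norm a)^2)"
        using L_le[of a y] t by (intro mult_left_mono) auto
      moreover have "t * (L b - lam * (norm b)^2) \<le> t * (u y + lam * (norm (y - b))^2 - lam * (norm b)^2)"
        using L_le[of b y] t by (intro mult_left_mono) auto
      ultimately show "lam * (norm c)^2 + (1 - t) * (L a - lam * (norm a)^2) + t * (L b - lam * (norm b)^2)
        \<le> u y + lam * (norm (y - c))^2" using id by linarith
    qed simp
    then have "lam * (norm c)^2 + (1 - t) * (L a - lam * (norm a)^2) + t * (L b - lam * (norm b)^2) \<le> L c"
      by (simp add: L_def lower_env_def)
    then show "H ((1 - t) *\<^sub>R a + t *\<^sub>R b) \<le> (1 - t) * H a + t * H b"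
      unfolding H_def c_def by (simp add: algebra_simps)
  qed simp
  have HC: "H \<in> C" unfolding C_def using Hconv Hg by blast
  have P3: "L x = upper_cc_transform lam f x" for x
  proof -
    have "convex_envelope g x = H x"
      unfolding convex_envelope_def C_def[symmetric]
    proof (rule antisym)
      show "(SUP g'\<in>C. g' x) \<le> H x"
      proof (rule cSUP_least)
        show "C \<noteq> {}" using HC by blast
      next
        fix phi assume "phi \<in> C"
        then have cv: "convex_on UNIV phi" and pg: "\<And>y. phi y \<le> g y" unfolding C_def by auto
        obtain q where q: "\<And>z. phi x + q \<bullet> (z - x) \<le> phi z" using subgrad[OF cv] by blast
        define y where "y = (1 / (2 * lam)) *\<^sub>R q"
        have qy: "q = (2 * lam) *\<^sub>R y" unfolding y_def using lam by simp
        have "u y \<le> lam * (norm x)^2 - phi x - lam * (norm (y - x))^2"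
          unfolding u_def upper_env_def
        proof (rule cSUP_least)
          fix z
          have fz: "f z \<le> lam * (norm z)^2 - phi x - q \<bullet> (z - x)"
            using q[of z] pg[of z] unfolding g_def by linarith
          have eq: "lam * (norm z)^2 - q \<bullet> (z - x) - lam * (norm (z - y))^2 + lam * (norm (y - x))^2
              = lam * (norm x)^2"
            unfolding qy sq_id by (simp add: inner_diff_right inner_commute algebra_simps)
          show "f z - lam * (norm (z - y))^2 \<le> lam * (norm x)^2 - phi x - lam * (norm (y - x))^2"
            using fz eq by linarith
        qed simp
        then have "L x \<le> lam * (norm x)^2 - phi x" using L_le[of x y] by linarith
        then show "phi x \<le> H x" unfolding H_def by linarith
      qed
      show "H x \<le> (SUP g'\<in>C. g' x)"
      proof (rule cSUP_upper[OF HC])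
        show "bdd_above ((\<lambda>g'. g' x) ` C)"
          by (rule bdd_aboveI[where M="g x"]) (auto simp: C_def)
      qed
    qed
    then show ?thesis unfolding upper_cc_transform_def g_def f_def H_def by simp
  qed
  show ?thesis using P1 P2 P3 unfolding f_def u_def L_def by auto
qed

end
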